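(* Let $R$ be a ring, $M$ a nonzero left $R$-module, $\Omega$ an infinite set, $N$ either $\bigoplus_{i\in\Omega} M$ or $\prod_{i\in\Omega} M$, and $E=\mathrm{End}_R(N)$. Let $(U_i)_{i\in I}$ be a family of subsets of $E$ with $\bigcup_{i\in I}U_i=E$ and $|I|\le|\Omega|$. Then there exist $i\in I$ and a moiety $\Sigma\subseteq\Omega$ such that $\Sigma$ is full with respect to $U_i$.
   Context: Rings are unital and associative; endomorphisms are written on the right of their arguments. For $\Sigma\subseteq\Omega$, $M^{\Sigma}$ denotes the $R$-submodule of $N$ consisting of elements supported on the coordinates in $\Sigma$ (so $N = M^{\Sigma}\oplus M^{\Omega\setminus\Sigma}$). For $U\subseteq E$, let $U_{\{\Sigma\}}=\{f\in U : M^{\Sigma}f\subseteq M^{\Sigma},\ M^{\Omega\setminus\Sigma}f\subseteq M^{\Omega\setminus\Sigma}\}$. A subset $\Sigma\subseteq\Omega$ is called full with respect to $U\subseteq E$ if every $R$-endomorphism of $M^{\Sigma}$ is the restriction to $M^{\Sigma}$ of some member of $U_{\{\Sigma\}}$. A subset $\Sigma\subseteq\Omega$ is a moiety if $|\Sigma|=|\Omega|=|\Omega\setminus\Sigma|$. *)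

theory Defs
  imports "HOL-Library.FuncSet" "HOL-Library.Equipollence"
begin

definition left_module :: "('r::ring_1 \<Rightarrow> 'm::ab_group_add \<Rightarrow> 'm) \<Rightarrow> bool" where
  "left_module smul \<longleftrightarrow>
     (\<forall>r x y. smul r (x + y) = smul r x + smul r y) \<and>
     (\<forall>r s x. smul (r + s) x = smul r x + smul s x) \<and>
     (\<forall>r s x. smul (r * s) x = smul r (smul s x)) \<and>
     (\<forall>x. smul 1 x = x)"

definition prod_mod :: "'i set \<Rightarrow> ('i \<Rightarrow> 'm::zero) set" where
  "prod_mod \<Omega> = {f. \<forall>i. i \<notin> \<Omega> \<longrightarrow> f i = 0}"

definition dsum_mod :: "'i set \<Rightarrow> ('i \<Rightarrow> 'm::zero) set" where
  "dsum_mod \<Omega> = {f \<in> prod_mod \<Omega>. finite {i. f i \<noteq> 0}}"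

text \<open>R-endomorphisms of a submodule S of N (with coordinatewise operations),
  represented extensionally (undefined outside S).\<close>
definition End_on ::
  "('r::ring_1 \<Rightarrow> 'm::ab_group_add \<Rightarrow> 'm) \<Rightarrow> ('i \<Rightarrow> 'm) set \<Rightarrow> (('i \<Rightarrow> 'm) \<Rightarrow> ('i \<Rightarrow> 'm)) set" where
  "End_on smul S = {\<phi>. \<phi> \<in> extensional S \<and> \<phi> ` S \<subseteq> S \<and>
     (\<forall>x\<in>S. \<forall>y\<in>S. \<phi> (\<lambda>i. x i + y i) = (\<lambda>i. \<phi> x i + \<phi> y i)) \<and>
     (\<forall>r. \<forall>x\<in>S. \<phi> (\<lambda>i. smul r (x i)) = (\<lambda>i. smul r (\<phi> x i)))}"

definition supp_sub :: "('i \<Rightarrow> 'm::zero) set \<Rightarrow> 'i set \<Rightarrow> 'i set \<Rightarrow> ('i \<Rightarrow> 'm) set" where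
  "supp_sub N \<Omega> \<Sigma> = {f \<in> N. \<forall>i\<in>\<Omega> - \<Sigma>. f i = 0}"

definition setstab ::
  "(('i \<Rightarrow> 'm::zero) \<Rightarrow> ('i \<Rightarrow> 'm)) set \<Rightarrow> ('i \<Rightarrow> 'm) set \<Rightarrow> 'i set \<Rightarrow> 'i set
     \<Rightarrow> (('i \<Rightarrow> 'm) \<Rightarrow> ('i \<Rightarrow> 'm)) set" where
  "setstab U N \<Omega> \<Sigma> = {f \<in> U. f ` supp_sub N \<Omega> \<Sigma> \<subseteq> supp_sub N \<Omega> \<Sigma> \<and>
                              f ` supp_sub N \<Omega> (\<Omega> - \<Sigma>) \<subseteq> supp_sub N \<Omega> (\<Omega> - \<Sigma>)}"

definition full_wrt ::
  "('r::ring_1 \<Rightarrow> 'm::ab_group_add \<Rightarrow> 'm) \<Rightarrow> ('i \<Rightarrow> 'm) set \<Rightarrow> 'i set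
     \<Rightarrow> (('i \<Rightarrow> 'm) \<Rightarrow> ('i \<Rightarrow> 'm)) set \<Rightarrow> 'i set \<Rightarrow> bool" where
  "full_wrt smul N \<Omega> U \<Sigma> \<longleftrightarrow>
     (\<forall>g \<in> End_on smul (supp_sub N \<Omega> \<Sigma>). \<exists>f \<in> setstab U N \<Omega> \<Sigma>.
        \<forall>x \<in> supp_sub N \<Omega> \<Sigma>. g x = f x)"

definition moiety :: "'i set \<Rightarrow> 'i set \<Rightarrow> bool" where
  "moiety \<Omega> \<Sigma> \<longleftrightarrow> \<Sigma> \<subseteq> \<Omega> \<and> \<Sigma> \<approx> \<Omega> \<and> \<Omega> - \<Sigma> \<approx> \<Omega>"

end

theory Submission
  imports Defs
begin

lemma N_facts:
  fixes N :: "('i \<Rightarrow> 'm::ab_group_add) set"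
  assumes N: "N = dsum_mod \<Omega> \<or> N = prod_mod \<Omega>"
  shows N_prod: "N \<subseteq> prod_mod \<Omega>"
    and N_res: "x \<in> N \<Longrightarrow> (\<lambda>w. if w \<in> S then x w else 0) \<in> N"
    and N_add: "x \<in> N \<Longrightarrow> y \<in> N \<Longrightarrow> (\<lambda>w. x w + y w) \<in> N"
    and N_zero: "(\<lambda>w. 0) \<in> N"
proof -
  show "N \<subseteq> prod_mod \<Omega>" using N by (auto simp: dsum_mod_def)
  show "x \<in> N \<Longrightarrow> (\<lambda>w. if w \<in> S then x w else 0) \<in> N"
    using N by (auto simp: dsum_mod_def prod_mod_def elim: rev_finite_subset)
  show "(\<lambda>w. 0) \<in> N" using N by (auto simp: dsum_mod_def prod_mod_def)
  assume "x \<in> N" "y \<in> N"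
  then show "(\<lambda>w. x w + y w) \<in> N"
  proof -
    have "{i. x i + y i \<noteq> 0} \<subseteq> {i. x i \<noteq> 0} \<union> {i. y i \<noteq> 0}" by auto
    then show ?thesis using N \<open>x \<in> N\<close> \<open>y \<in> N\<close>
      by (auto simp: dsum_mod_def prod_mod_def intro: finite_subset[OF _ finite_UnI])
  qed
qed

lemma N_smul:
  assumes N: "N = dsum_mod \<Omega> \<or> N = prod_mod \<Omega>"
    and z: "\<And>r. smul r 0 = 0"
    and x: "x \<in> N"
  shows "(\<lambda>w. smul r (x w)) \<in> N"
  using N x z apply (auto simp: dsum_mod_def prod_mod_def)
  apply (rule rev_finite_subset[of "{i. x i \<noteq> 0}"])
   apply auto
  done

lemma smul_zero:
  assumes "left_module smul"
  shows "smul r 0 = 0"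
proof -
  have "smul r 0 = smul r 0 + smul r 0" using assms unfolding left_module_def by (metis add_0)
  then show ?thesis by simp
qed

lemma supp_zero:
  assumes "N \<subseteq> prod_mod \<Omega>" "y \<in> supp_sub N \<Omega> S" "w \<notin> S"
  shows "y w = 0"
  using assms by (auto simp: supp_sub_def prod_mod_def)

lemma key:
  fixes smul :: "'r::ring_1 \<Rightarrow> 'm::ab_group_add \<Rightarrow> 'm"
    and \<Omega> :: "'i set"
    and N :: "('i \<Rightarrow> 'm) set"
    and U :: "'j \<Rightarrow> (('i \<Rightarrow> 'm) \<Rightarrow> ('i \<Rightarrow> 'm)) set"
    and I :: "'j set"
    and \<Sigma> :: "'j \<Rightarrow> 'i set"
  assumes lm: "left_module smul"
    and N: "N = dsum_mod \<Omega> \<or> N = prod_mod \<Omega>"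
    and cover: "(\<Union>i\<in>I. U i) = End_on smul N"
    and sub: "\<forall>i\<in>I. \<Sigma> i \<subseteq> \<Omega>"
    and disj: "\<forall>i\<in>I. \<forall>j\<in>I. i \<noteq> j \<longrightarrow> \<Sigma> i \<inter> \<Sigma> j = {}"
  shows "\<exists>i\<in>I. full_wrt smul N \<Omega> (U i) (\<Sigma> i)"
proof (rule ccontr)
  assume "\<not> ?thesis"
  then have "\<forall>i\<in>I. \<exists>g. g \<in> End_on smul (supp_sub N \<Omega> (\<Sigma> i)) \<and>
     \<not> (\<exists>f \<in> setstab (U i) N \<Omega> (\<Sigma> i). \<forall>x \<in> supp_sub N \<Omega> (\<Sigma> i). g x = f x)"
    unfolding full_wrt_def by blast
  from bchoice[OF this] obtain G where GG: "\<forall>i\<in>I. G i \<in> End_on smul (supp_sub N \<Omega> (\<Sigma> i)) \<and>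
     \<not> (\<exists>f \<in> setstab (U i) N \<Omega> (\<Sigma> i). \<forall>x \<in> supp_sub N \<Omega> (\<Sigma> i). G i x = f x)"
    by (elim exE)
  have G: "\<And>i. i \<in> I \<Longrightarrow> G i \<in> End_on smul (supp_sub N \<Omega> (\<Sigma> i))"
    using GG by blast
  have Gn: "\<And>i. i \<in> I \<Longrightarrow> \<not> (\<exists>f \<in> setstab (U i) N \<Omega> (\<Sigma> i). \<forall>x \<in> supp_sub N \<Omega> (\<Sigma> i). G i x = f x)"
    using GG by blast
  have z: "\<And>r. smul r 0 = 0" using smul_zero[OF lm] .
  have Np: "N \<subseteq> prod_mod \<Omega>" using N_prod[OF N] .
  define res where "res S x = (\<lambda>w. if w \<in> S then x w else (0::'m))" for S and x :: "'i \<Rightarrow> 'm"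
  define idx where "idx w = (SOME i. i \<in> I \<and> w \<in> \<Sigma> i)" for w
  define F where "F = (\<lambda>x\<in>N. \<lambda>w. if \<exists>i\<in>I. w \<in> \<Sigma> i then G (idx w) (res (\<Sigma> (idx w)) x) w else 0)"
  have idx: "\<And>i w. i \<in> I \<Longrightarrow> w \<in> \<Sigma> i \<Longrightarrow> idx w = i"
  proof -
    fix i w assume "i \<in> I" "w \<in> \<Sigma> i"
    then have "idx w \<in> I \<and> w \<in> \<Sigma> (idx w)" unfolding idx_def by (metis (mono_tags, lifting) someI)
    then show "idx w = i" using disj \<open>i \<in> I\<close> \<open>w \<in> \<Sigma> i\<close> by blast
  qed
  have res_in: "\<And>i x. i \<in> I \<Longrightarrow> x \<in> N \<Longrightarrow> res (\<Sigma> i) x \<in> supp_sub N \<Omega> (\<Sigma> i)"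
    using N_res[OF N] unfolding res_def supp_sub_def by auto
  have G_in: "\<And>i y. i \<in> I \<Longrightarrow> y \<in> supp_sub N \<Omega> (\<Sigma> i) \<Longrightarrow> G i y \<in> supp_sub N \<Omega> (\<Sigma> i)"
    using G unfolding End_on_def by blast
  have G_add: "\<And>i x y. i \<in> I \<Longrightarrow> x \<in> supp_sub N \<Omega> (\<Sigma> i) \<Longrightarrow> y \<in> supp_sub N \<Omega> (\<Sigma> i) \<Longrightarrow>
      G i (\<lambda>w. x w + y w) = (\<lambda>w. G i x w + G i y w)"
    using G unfolding End_on_def by blast
  have G_smul: "\<And>i r x. i \<in> I \<Longrightarrow> x \<in> supp_sub N \<Omega> (\<Sigma> i) \<Longrightarrow>
      G i (\<lambda>w. smul r (x w)) = (\<lambda>w. smul r (G i x w))"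
    using G unfolding End_on_def by blast
  have zero_in: "\<And>S. (\<lambda>w. 0) \<in> supp_sub N \<Omega> S"
    using N_zero[OF N] unfolding supp_sub_def by auto
  have G0: "\<And>i. i \<in> I \<Longrightarrow> G i (\<lambda>w. 0) = (\<lambda>w. 0)"
  proof -
    fix i assume i: "i \<in> I"
    have "G i (\<lambda>w. 0 + 0) = (\<lambda>w. G i (\<lambda>w. 0) w + G i (\<lambda>w. 0) w)"
      using G_add[OF i zero_in zero_in] .
    then show "G i (\<lambda>w. 0) = (\<lambda>w. 0)" by (simp add: fun_eq_iff)
  qed
  have Gz: "\<And>i y w. i \<in> I \<Longrightarrow> y \<in> supp_sub N \<Omega> (\<Sigma> i) \<Longrightarrow> w \<notin> \<Sigma> i \<Longrightarrow> G i y w = 0"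
    using G_in supp_zero[OF Np] by blast
  have GN: "\<And>i y. i \<in> I \<Longrightarrow> y \<in> supp_sub N \<Omega> (\<Sigma> i) \<Longrightarrow> G i y \<in> N"
    using G_in unfolding supp_sub_def by blast
  have FN: "F x \<in> N" if x: "x \<in> N" for x
  proof -
    have Fx: "F x = (\<lambda>w. if \<exists>i\<in>I. w \<in> \<Sigma> i then G (idx w) (res (\<Sigma> (idx w)) x) w else 0)"
      using x unfolding F_def by simp
    have pm: "F x \<in> prod_mod \<Omega>"
      unfolding Fx prod_mod_def using sub by auto
    show ?thesis
    proof (cases "N = prod_mod \<Omega>")
      case True then show ?thesis using pm by simp
    next
      case False
      then have Nd: "N = dsum_mod \<Omega>" using N by blast
      have fx: "finite {w. x w \<noteq> 0}" using x Nd by (simp add: dsum_mod_def)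
      have "{w. F x w \<noteq> 0} \<subseteq> (\<Union>i \<in> idx ` ({w. x w \<noteq> 0} \<inter> (\<Union>j\<in>I. \<Sigma> j)). {w. G i (res (\<Sigma> i) x) w \<noteq> 0})"
      proof
        fix w assume "w \<in> {w. F x w \<noteq> 0}"
        then obtain i where i: "i \<in> I" "w \<in> \<Sigma> i" and ne: "G i (res (\<Sigma> i) x) w \<noteq> 0"
          unfolding Fx by (auto split: if_splits simp: idx)
        have "res (\<Sigma> i) x \<noteq> (\<lambda>w. 0)" using ne G0[OF i(1)] by auto
        have "\<exists>w'. w' \<in> \<Sigma> i \<and> x w' \<noteq> 0"
        proof (rule ccontr)
          assume "\<not> (\<exists>w'. w' \<in> \<Sigma> i \<and> x w' \<noteq> 0)"
          then have "res (\<Sigma> i) x = (\<lambda>w. 0)" unfolding res_def by auto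
          then show False using \<open>res (\<Sigma> i) x \<noteq> (\<lambda>w. 0)\<close> by blast
        qed
        then obtain w' where "w' \<in> \<Sigma> i" "x w' \<noteq> 0" by blast
        then have "i \<in> idx ` ({w. x w \<noteq> 0} \<inter> (\<Union>j\<in>I. \<Sigma> j))"
          using idx[OF i(1)] i(1) by (metis (mono_tags, lifting) IntI UN_I image_eqI mem_Collect_eq)
        then show "w \<in> (\<Union>i \<in> idx ` ({w. x w \<noteq> 0} \<inter> (\<Union>j\<in>I. \<Sigma> j)). {w. G i (res (\<Sigma> i) x) w \<noteq> 0})"
          using ne by blast
      qed
      moreover have "finite (\<Union>i \<in> idx ` ({w. x w \<noteq> 0} \<inter> (\<Union>j\<in>I. \<Sigma> j)). {w. G i (res (\<Sigma> i) x) w \<noteq> 0})"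
      proof (rule finite_UN_I)
        show "finite (idx ` ({w. x w \<noteq> 0} \<inter> (\<Union>j\<in>I. \<Sigma> j)))" using fx by simp
        fix i assume "i \<in> idx ` ({w. x w \<noteq> 0} \<inter> (\<Union>j\<in>I. \<Sigma> j))"
        then have i: "i \<in> I" using idx by auto
        have "G i (res (\<Sigma> i) x) \<in> N" using GN[OF i res_in[OF i x]] .
        then show "finite {w. G i (res (\<Sigma> i) x) w \<noteq> 0}" using Nd by (simp add: dsum_mod_def)
      qed
      ultimately show ?thesis using pm Nd unfolding dsum_mod_def
        by (auto elim: rev_finite_subset)
    qed
  qed
  have res_add: "res S (\<lambda>w. x w + y w) = (\<lambda>w. res S x w + res S y w)" for S x y
    unfolding res_def by auto
  have res_smul: "res S (\<lambda>w. smul r (x w)) = (\<lambda>w. smul r (res S x w))" for S x r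
    unfolding res_def using z by auto
  have FE: "F \<in> End_on smul N"
    unfolding End_on_def
  proof (intro CollectI conjI ballI allI)
    show "F \<in> extensional N" unfolding F_def by simp
    show "F ` N \<subseteq> N" using FN by blast
  next
    fix x y assume x: "x \<in> N" and y: "y \<in> N"
    have xy: "(\<lambda>w. x w + y w) \<in> N" using N_add[OF N x y] .
    show "F (\<lambda>i. x i + y i) = (\<lambda>i. F x i + F y i)"
    proof
      fix w
      show "F (\<lambda>i. x i + y i) w = F x w + F y w"
      proof (cases "\<exists>i\<in>I. w \<in> \<Sigma> i")
        case True
        then obtain i where i: "i \<in> I" "w \<in> \<Sigma> i" by blast
        then show ?thesis using x y xy unfolding F_def
          by (simp add: idx res_add G_add[OF i(1) res_in[OF i(1) x] res_in[OF i(1) y]])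
      next
        case False then show ?thesis using x y xy unfolding F_def by simp
      qed
    qed
  next
    fix r x assume x: "x \<in> N"
    have rx: "(\<lambda>w. smul r (x w)) \<in> N" using N_smul[where smul=smul and r=r, OF N z x] .
    show "F (\<lambda>i. smul r (x i)) = (\<lambda>i. smul r (F x i))"
    proof
      fix w
      show "F (\<lambda>i. smul r (x i)) w = smul r (F x w)"
      proof (cases "\<exists>i\<in>I. w \<in> \<Sigma> i")
        case True
        then obtain i where i: "i \<in> I" "w \<in> \<Sigma> i" by blast
        then show ?thesis using x rx unfolding F_def
          by (simp add: z idx res_smul G_smul[OF i(1) res_in[OF i(1) x]])
      next
        case False then show ?thesis using x rx z unfolding F_def by simp
      qed
    qed
  qed
  then obtain i0 where i0: "i0 \<in> I" "F \<in> U i0" using cover by blast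
  have agree: "F x = G i0 x" if x: "x \<in> supp_sub N \<Omega> (\<Sigma> i0)" for x
  proof
    fix w
    have xN: "x \<in> N" using x unfolding supp_sub_def by blast
    have xz: "\<And>w. w \<notin> \<Sigma> i0 \<Longrightarrow> x w = 0" using supp_zero[OF Np x] .
    show "F x w = G i0 x w"
    proof (cases "\<exists>i\<in>I. w \<in> \<Sigma> i")
      case True
      then obtain j where j: "j \<in> I" "w \<in> \<Sigma> j" by blast
      show ?thesis
      proof (cases "j = i0")
        case True
        have "res (\<Sigma> i0) x = x" unfolding res_def using xz by auto
        have ex: "\<exists>i\<in>I. w \<in> \<Sigma> i" using j by blast
        have "F x w = G (idx w) (res (\<Sigma> (idx w)) x) w" using xN ex unfolding F_def by simp
        then show ?thesis using j True \<open>res (\<Sigma> i0) x = x\<close> by (simp add: idx)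
      next
        case False
        have dj: "\<Sigma> j \<inter> \<Sigma> i0 = {}" using disj j i0 False by blast
        have "res (\<Sigma> j) x = (\<lambda>w. 0)" unfolding res_def
        proof (rule ext)
          fix v show "(if v \<in> \<Sigma> j then x v else 0) = 0" using xz[of v] dj by auto
        qed
        moreover have "w \<notin> \<Sigma> i0" using disj j i0 False by blast
        have ex: "\<exists>i\<in>I. w \<in> \<Sigma> i" using j by blast
        have "F x w = G (idx w) (res (\<Sigma> (idx w)) x) w" using xN ex unfolding F_def by simp
        ultimately show ?thesis using j G0[OF j(1)] Gz[OF i0(1) x \<open>w \<notin> \<Sigma> i0\<close>] by (simp add: idx)
      qed
    next
      case False
      then have "w \<notin> \<Sigma> i0" using i0 by blast
      then show ?thesis using False xN Gz[OF i0(1) x] unfolding F_def by simp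
    qed
  qed
  have "F \<in> setstab (U i0) N \<Omega> (\<Sigma> i0)"
    unfolding setstab_def
  proof (intro CollectI conjI subsetI)
    show "F \<in> U i0" using i0 by blast
  next
    fix y assume "y \<in> F ` supp_sub N \<Omega> (\<Sigma> i0)"
    then obtain x where x: "x \<in> supp_sub N \<Omega> (\<Sigma> i0)" "y = F x" by blast
    then show "y \<in> supp_sub N \<Omega> (\<Sigma> i0)" using agree G_in[OF i0(1)] by simp
  next
    fix y assume "y \<in> F ` supp_sub N \<Omega> (\<Omega> - \<Sigma> i0)"
    then obtain x where x: "x \<in> supp_sub N \<Omega> (\<Omega> - \<Sigma> i0)" "y = F x" by blast
    have xN: "x \<in> N" using x unfolding supp_sub_def by blast
    have "res (\<Sigma> i0) x = (\<lambda>w. 0)"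
      unfolding res_def
    proof (rule ext)
      fix v
      have "v \<in> \<Sigma> i0 \<Longrightarrow> x v = 0" using x(1) sub i0 unfolding supp_sub_def by blast
      then show "(if v \<in> \<Sigma> i0 then x v else 0) = 0" by simp
    qed
    then have "\<forall>w \<in> \<Omega> - (\<Omega> - \<Sigma> i0). F x w = 0"
    proof (intro ballI)
      fix w assume r0: "res (\<Sigma> i0) x = (\<lambda>w. 0)" and w: "w \<in> \<Omega> - (\<Omega> - \<Sigma> i0)"
      then have wi: "w \<in> \<Sigma> i0" by blast
      have ex: "\<exists>i\<in>I. w \<in> \<Sigma> i" using wi i0 by blast
      have "F x w = G (idx w) (res (\<Sigma> (idx w)) x) w" using xN ex unfolding F_def by simp
      also have "\<dots> = G i0 (res (\<Sigma> i0) x) w" using idx[OF i0(1) wi] by simp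
      also have "\<dots> = 0" using r0 G0[OF i0(1)] by simp
      finally show "F x w = 0" .
    qed
    then show "y \<in> supp_sub N \<Omega> (\<Omega> - \<Sigma> i0)" using FN[OF xN] x(2) unfolding supp_sub_def by simp
  qed
  moreover have "\<forall>x\<in>supp_sub N \<Omega> (\<Sigma> i0). G i0 x = F x" using agree by simp
  ultimately have "\<exists>f \<in> setstab (U i0) N \<Omega> (\<Sigma> i0). \<forall>x \<in> supp_sub N \<Omega> (\<Sigma> i0). G i0 x = f x"
    by (rule bexI[rotated, where x=F])
  then show False using Gn[OF i0(1)] by simp
qed

theorem lemma2:
  fixes smul :: "'r::ring_1 \<Rightarrow> 'm::ab_group_add \<Rightarrow> 'm"
    and \<Omega> :: "'i set"
    and N :: "('i \<Rightarrow> 'm) set"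
    and U :: "'j \<Rightarrow> (('i \<Rightarrow> 'm) \<Rightarrow> ('i \<Rightarrow> 'm)) set"
    and I :: "'j set"
  assumes "left_module smul"
    and "\<exists>m::'m. m \<noteq> 0"
    and "infinite \<Omega>"
    and "N = dsum_mod \<Omega> \<or> N = prod_mod \<Omega>"
    and "(\<Union>i\<in>I. U i) = End_on smul N"
    and "I \<lesssim> \<Omega>"
  shows "\<exists>i\<in>I. \<exists>\<Sigma>. moiety \<Omega> \<Sigma> \<and> full_wrt smul N \<Omega> (U i) \<Sigma>"
proof -
  have "\<exists>h. bij_betw h (\<Omega> \<times> \<Omega>) \<Omega>"
    using card_of_ordIso[THEN iffD2, OF card_of_Times_same_infinite[OF assms(3)]] .
  then obtain h where h: "bij_betw h (\<Omega> \<times> \<Omega>) \<Omega>" by (elim exE)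
  obtain e where e: "inj_on e I" "e \<in> I \<rightarrow> \<Omega>" using assms(6) unfolding lepoll_def' by blast
  define S where "S i = h ` ({e i} \<times> \<Omega>)" for i
  have hi: "inj_on h (\<Omega> \<times> \<Omega>)" and hs: "h ` (\<Omega> \<times> \<Omega>) = \<Omega>" using h by (auto simp: bij_betw_def)
  have hinj: "\<And>a b c d. a \<in> \<Omega> \<Longrightarrow> b \<in> \<Omega> \<Longrightarrow> c \<in> \<Omega> \<Longrightarrow> d \<in> \<Omega> \<Longrightarrow> h (a, b) = h (c, d) \<Longrightarrow> a = c"
  proof -
    fix a b c d assume "a \<in> \<Omega>" "b \<in> \<Omega>" "c \<in> \<Omega>" "d \<in> \<Omega>" "h (a, b) = h (c, d)"
    then have "(a, b) = (c, d)" using hi unfolding inj_on_def by blast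
    then show "a = c" by simp
  qed
  have sub: "\<forall>i\<in>I. S i \<subseteq> \<Omega>" unfolding S_def using e(2) hs by blast
  have disjS: "S i \<inter> S' = {}" if ds: "e i \<in> \<Omega>" "c \<in> \<Omega>" "c \<noteq> e i" "S' = h ` ({c} \<times> \<Omega>)" for i c S'
  proof -
    have "x \<notin> S'" if x: "x \<in> S i" for x
    proof
      assume "x \<in> S'"
      then obtain b where b: "b \<in> \<Omega>" "x = h (c, b)" using ds(4) by blast
      obtain a where a: "a \<in> \<Omega>" "x = h (e i, a)" using x unfolding S_def by blast
      have "e i = c" using hinj[OF \<open>e i \<in> \<Omega>\<close> a(1) \<open>c \<in> \<Omega>\<close> b(1)] a b by simp
      then show False using \<open>c \<noteq> e i\<close> by simp
    qed
    then show ?thesis by blast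
  qed
  have disj: "\<forall>i\<in>I. \<forall>j\<in>I. i \<noteq> j \<longrightarrow> S i \<inter> S j = {}"
  proof (intro ballI impI)
    fix i j assume ij: "i \<in> I" "j \<in> I" "i \<noteq> j"
    then have "e i \<noteq> e j" using e(1) by (meson inj_onD)
    then show "S i \<inter> S j = {}" using disjS[of i "e j" "S j"] e(2) ij unfolding S_def by auto
  qed
  have moi: "moiety \<Omega> (S i)" if i: "i \<in> I" for i
  proof -
    have ei: "e i \<in> \<Omega>" using e(2) i by blast
    have hsub: "inj_on h ({k} \<times> \<Omega>)" if "k \<in> \<Omega>" for k
      using hi by (rule inj_on_subset) (use that in auto)
    have eq: "h ` ({k} \<times> \<Omega>) \<approx> \<Omega>" if "k \<in> \<Omega>" for k
      using eqpoll_trans[OF inj_on_image_eqpoll_self[OF hsub[OF that]] times_singleton_eqpoll] .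
    have "infinite (\<Omega> - {e i})" using assms(3) by simp
    then obtain k where "k \<in> \<Omega> - {e i}" by (metis finite.emptyI ex_in_conv)
    then have k: "k \<in> \<Omega>" "k \<noteq> e i" by auto
    have "h ` ({k} \<times> \<Omega>) \<inter> S i = {}" using disjS[OF ei k(1) k(2) refl] by blast
    moreover have "h ` ({k} \<times> \<Omega>) \<subseteq> \<Omega>" using hs k(1) by blast
    ultimately have "h ` ({k} \<times> \<Omega>) \<subseteq> \<Omega> - S i" by blast
    then have "\<Omega> \<lesssim> \<Omega> - S i"
      by (rule lepoll_trans[OF eqpoll_imp_lepoll[OF eqpoll_sym[OF eq[OF k(1)]]] subset_imp_lepoll])
    moreover have "\<Omega> - S i \<lesssim> \<Omega>" by (rule subset_imp_lepoll) blast
    ultimately have "\<Omega> - S i \<approx> \<Omega>" by (rule lepoll_antisym[rotated])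
    moreover have "S i \<approx> \<Omega>" unfolding S_def using eq[OF ei] .
    ultimately show ?thesis unfolding moiety_def using sub i by blast
  qed
  obtain i where "i \<in> I" "full_wrt smul N \<Omega> (U i) (S i)"
    using key[OF assms(1) assms(4) assms(5) sub disj] by blast
  then show ?thesis using moi by blast
qed

end
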